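(* Let $A_4$ be the alternating group of degree 4. The following d-identities form a basis of d-identities of $A_4$ (i.e. they all hold in $A_4$, and every group satisfying all of them is isomorphic to a section of $A_4$): (1) $\omega_{12}=\bigvee_{0\le i<j\le 12}(x_i=x_j)$; (2) $(x^2=1)\vee(x^3=1)$; (3) $(x_1^3=1)\vee(x_2^3=1)\vee((x_1x_2)^2=1)$; (4) $\bigvee_{(k_1,k_2,k_3)}\big(x_1^{3k_1}x_2^{3k_2}x_3^{3k_3}=1\big)$, the disjunction running over all nonzero vectors $(k_1,k_2,k_3)\in\{0,1\}^3$; (5) $(x_1^4=1)\vee(x_2^4=1)\vee((x_1x_2)^4=1)\vee((x_1x_2^2)^4=1)$.
   Context: A d-identity (disjunctive identity) is a universally quantified formula $\forall x_1\dots x_k\,[(f_1=1)\vee\dots\vee(f_n=1)]$ with the $f_i$ words in the free group on the variables; $u=v$ abbreviates $uv^{-1}=1$. A group satisfies it if it is true for all assignments. For a group $G$, $\mathrm{dvar}(G)$ is the class of groups satisfying every d-identity satisfied by $G$; for finite $G$ it is the class of groups isomorphic to sections (quotients of subgroups) of $G$. A set of d-identities is a basis of d-identities of $G$ if all its members hold in $G$ and every group satisfying them lies in $\mathrm{dvar}(G)$. *)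

theory Defs
  imports "HOL-Algebra.Algebra"
begin

definition did1 :: "('a, 'b) monoid_scheme \<Rightarrow> bool" where
  "did1 G \<longleftrightarrow> (\<forall>x :: nat \<Rightarrow> 'a. (\<forall>i\<le>12. x i \<in> carrier G) \<longrightarrow>
      (\<exists>i j. i < j \<and> j \<le> 12 \<and> x i = x j))"

definition did2 :: "('a, 'b) monoid_scheme \<Rightarrow> bool" where
  "did2 G \<longleftrightarrow> (\<forall>x\<in>carrier G. x [^]\<^bsub>G\<^esub> (2::nat) = \<one>\<^bsub>G\<^esub> \<or> x [^]\<^bsub>G\<^esub> (3::nat) = \<one>\<^bsub>G\<^esub>)"

definition did3 :: "('a, 'b) monoid_scheme \<Rightarrow> bool" where
  "did3 G \<longleftrightarrow> (\<forall>x1\<in>carrier G. \<forall>x2\<in>carrier G.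
      x1 [^]\<^bsub>G\<^esub> (3::nat) = \<one>\<^bsub>G\<^esub> \<or> x2 [^]\<^bsub>G\<^esub> (3::nat) = \<one>\<^bsub>G\<^esub> \<or>
      (x1 \<otimes>\<^bsub>G\<^esub> x2) [^]\<^bsub>G\<^esub> (2::nat) = \<one>\<^bsub>G\<^esub>)"

definition did4 :: "('a, 'b) monoid_scheme \<Rightarrow> bool" where
  "did4 G \<longleftrightarrow> (\<forall>x1\<in>carrier G. \<forall>x2\<in>carrier G. \<forall>x3\<in>carrier G.
      \<exists>k1\<in>{0::nat,1}. \<exists>k2\<in>{0::nat,1}. \<exists>k3\<in>{0::nat,1}. (k1, k2, k3) \<noteq> (0, 0, 0) \<and>
        x1 [^]\<^bsub>G\<^esub> (3 * k1) \<otimes>\<^bsub>G\<^esub> x2 [^]\<^bsub>G\<^esub> (3 * k2) \<otimes>\<^bsub>G\<^esub> x3 [^]\<^bsub>G\<^esub> (3 * k3)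
          = \<one>\<^bsub>G\<^esub>)"

definition did5 :: "('a, 'b) monoid_scheme \<Rightarrow> bool" where
  "did5 G \<longleftrightarrow> (\<forall>x1\<in>carrier G. \<forall>x2\<in>carrier G.
      x1 [^]\<^bsub>G\<^esub> (4::nat) = \<one>\<^bsub>G\<^esub> \<or> x2 [^]\<^bsub>G\<^esub> (4::nat) = \<one>\<^bsub>G\<^esub> \<or>
      (x1 \<otimes>\<^bsub>G\<^esub> x2) [^]\<^bsub>G\<^esub> (4::nat) = \<one>\<^bsub>G\<^esub> \<or>
      (x1 \<otimes>\<^bsub>G\<^esub> (x2 \<otimes>\<^bsub>G\<^esub> x2)) [^]\<^bsub>G\<^esub> (4::nat) = \<one>\<^bsub>G\<^esub>)"

definition satisfies_A4_basis :: "('a, 'b) monoid_scheme \<Rightarrow> bool" where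
  "satisfies_A4_basis G \<longleftrightarrow> did1 G \<and> did2 G \<and> did3 G \<and> did4 G \<and> did5 G"

definition iso_to_section_of :: "('a, 'b) monoid_scheme \<Rightarrow> ('c, 'd) monoid_scheme \<Rightarrow> bool" where
  "iso_to_section_of G A \<longleftrightarrow> (\<exists>H N. subgroup H A \<and> N \<lhd> (subgroup_generated A H) \<and>
      G \<cong> (subgroup_generated A H Mod N))"

end

theory Submission
  imports Defs
begin

lemma transport_section:
  fixes G :: "('a,'b) monoid_scheme" and A :: "('c,'d) monoid_scheme"
  assumes grG: "group G" and grA: "group A" and sub: "subgroup H A"
   and mI: "\<And>x y. x\<in>I \<Longrightarrow> y\<in>I \<Longrightarrow> m x y \<in> I"
   and injA: "inj_on fA I" and imA: "fA ` I = H"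
   and homA: "\<And>x y. x\<in>I \<Longrightarrow> y\<in>I \<Longrightarrow> fA (m x y) = fA x \<otimes>\<^bsub>A\<^esub> fA y"
   and homG: "\<And>x y. x\<in>I \<Longrightarrow> y\<in>I \<Longrightarrow> fG (m x y) = fG x \<otimes>\<^bsub>G\<^esub> fG y"
   and imG: "fG ` I = carrier G"
  shows "iso_to_section_of G A"
proof -
  define S where "S = subgroup_generated A H"
  define psi where "psi = (\<lambda>s. fG (inv_into I fA s))"
  have cS: "carrier S = H" unfolding S_def using subgroup.carrier_subgroup_generated_subgroup[OF sub] by simp
  have grS: "group S" unfolding S_def using grA by (simp add: group.group_subgroup_generated)
  have psi_f: "psi (fA x) = fG x" if "x \<in> I" for x
    unfolding psi_def using injA that by simp
  have hom: "psi \<in> hom S G"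
  proof (rule homI)
    fix s assume "s \<in> carrier S"
    then obtain x where "x \<in> I" "s = fA x" using cS imA by auto
    then show "psi s \<in> carrier G" using psi_f imG by auto
  next
    fix s t assume "s \<in> carrier S" "t \<in> carrier S"
    then obtain x y where xy: "x \<in> I" "s = fA x" "y \<in> I" "t = fA y" using cS imA by blast
    have "s \<otimes>\<^bsub>S\<^esub> t = fA (m x y)" using xy homA unfolding S_def by simp
    then show "psi (s \<otimes>\<^bsub>S\<^esub> t) = psi s \<otimes>\<^bsub>G\<^esub> psi t"
      using xy psi_f homG mI by simp
  qed
  have gh: "group_hom S G psi" using grS grG hom
    by (simp add: group_hom_def group_hom_axioms_def)
  have im: "psi ` carrier S = carrier G"
  proof -
    have "psi ` carrier S = psi ` fA ` I" using cS imA by simp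
    also have "\<dots> = fG ` I" by (force simp: psi_f image_image intro: image_cong)
    finally show ?thesis using imG by simp
  qed
  have iso1: "(S Mod (kernel S G psi)) \<cong> G" using group_hom.FactGroup_iso[OF gh im] .
  have nrm: "kernel S G psi \<lhd> S" using group_hom.normal_kernel[OF gh] .
  have "G \<cong> (S Mod (kernel S G psi))"
    using group.iso_sym[OF normal.factorgroup_is_group[OF nrm] iso1] .
  then show ?thesis unfolding iso_to_section_of_def S_def using sub nrm S_def by blast
qed

definition rot :: "nat \<Rightarrow> nat \<times> nat \<Rightarrow> nat \<times> nat" where
  "rot k = (\<lambda>(i,j). if k = 0 then (i,j) else if k = 1 then (j, i+j) else (i+j, i))"
definition mfull :: "nat\<times>nat\<times>nat \<Rightarrow> nat\<times>nat\<times>nat \<Rightarrow> nat\<times>nat\<times>nat" where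
 "mfull = (\<lambda>(i,j,k) (i',j',k'). let (p,q) = rot k (i',j') in ((i+p) mod 2, (j+q) mod 2, (k+k') mod 3))"
definition Ifull :: "(nat\<times>nat\<times>nat) set" where
 "Ifull = {(0,0,0),(0,0,1),(0,0,2),(0,1,0),(0,1,1),(0,1,2),(1,0,0),(1,0,1),(1,0,2),(1,1,0),(1,1,1),(1,1,2)}"
definition nf :: "('a,'b) monoid_scheme \<Rightarrow> 'a \<Rightarrow> 'a \<Rightarrow> 'a \<Rightarrow> nat\<times>nat\<times>nat \<Rightarrow> 'a" where
 "nf G a b c = (\<lambda>(i,j,k). a[^]\<^bsub>G\<^esub>i \<otimes>\<^bsub>G\<^esub> (b[^]\<^bsub>G\<^esub>j \<otimes>\<^bsub>G\<^esub> c[^]\<^bsub>G\<^esub>k))"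

lemma (in group) nf_mult:
  assumes ab: "a \<in> carrier G" "b \<in> carrier G" "c \<in> carrier G"
    and r1: "a \<otimes> a = \<one>" and r2: "b \<otimes> b = \<one>" and r3: "b \<otimes> a = a \<otimes> b"
    and r4: "c \<otimes> (c \<otimes> c) = \<one>" and r5: "c \<otimes> a = b \<otimes> c" and r6: "c \<otimes> b = a \<otimes> (b \<otimes> c)"
  shows "\<forall>x\<in>Ifull. \<forall>y\<in>Ifull. nf G a b c (mfull x y) = nf G a b c x \<otimes> nf G a b c y"
proof -
  have s1: "a \<otimes> (a \<otimes> z) = z" if "z \<in> carrier G" for z using r1 that ab by (simp flip: m_assoc)
  have s2: "b \<otimes> (b \<otimes> z) = z" if "z \<in> carrier G" for z using r2 that ab by (simp flip: m_assoc)
  have s3: "b \<otimes> (a \<otimes> z) = a \<otimes> (b \<otimes> z)" if "z \<in> carrier G" for z using r3 that ab by (simp flip: m_assoc)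
  have s4: "c \<otimes> (c \<otimes> (c \<otimes> z)) = z" if "z \<in> carrier G" for z using r4 that ab by (simp flip: m_assoc)
  have s5: "c \<otimes> (a \<otimes> z) = b \<otimes> (c \<otimes> z)" if "z \<in> carrier G" for z using r5 that ab by (simp flip: m_assoc)
  have s6: "c \<otimes> (b \<otimes> z) = a \<otimes> (b \<otimes> (c \<otimes> z))" if "z \<in> carrier G" for z using r6 that ab by (simp flip: m_assoc)
  note rules = r1 r2 r3 r4 r5 r6 s1 s2 s3 s4 s5 s6
  show ?thesis
    unfolding Ifull_def ball_simps
    apply (simp add: nf_def mfull_def rot_def)
    apply (simp add: numeral_eq_Suc)
    apply (simp add: m_assoc ab rules)
    done
qed

definition pl :: "nat \<Rightarrow> nat \<Rightarrow> nat \<Rightarrow> nat \<Rightarrow> nat \<Rightarrow> nat" where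
  "pl a b c d = (\<lambda>x. if x = 1 then a else if x = 2 then b else if x = 3 then c else if x = 4 then d else x)"

lemma pl_num [simp]: "pl a b c d 1 = a" "pl a b c d 2 = b" "pl a b c d 3 = c" "pl a b c d 4 = d"
  "pl a b c d (Suc 0) = a"
  by (simp_all add: pl_def)

lemma pl_app: "pl a b c d x = (if x = 1 then a else if x = 2 then b else if x = 3 then c else if x = 4 then d else x)"
  by (simp add: pl_def)

lemma pow_num: "x [^]\<^bsub>G\<^esub> (1::nat) = \<one>\<^bsub>G\<^esub> \<otimes>\<^bsub>G\<^esub> x"
  "x [^]\<^bsub>G\<^esub> (2::nat) = \<one>\<^bsub>G\<^esub> \<otimes>\<^bsub>G\<^esub> x \<otimes>\<^bsub>G\<^esub> x"
  "x [^]\<^bsub>G\<^esub> (3::nat) = \<one>\<^bsub>G\<^esub> \<otimes>\<^bsub>G\<^esub> x \<otimes>\<^bsub>G\<^esub> x \<otimes>\<^bsub>G\<^esub> x"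
  "x [^]\<^bsub>G\<^esub> (4::nat) = \<one>\<^bsub>G\<^esub> \<otimes>\<^bsub>G\<^esub> x \<otimes>\<^bsub>G\<^esub> x \<otimes>\<^bsub>G\<^esub> x \<otimes>\<^bsub>G\<^esub> x"
  by (simp_all add: numeral_eq_Suc)

lemma pl_comp [simp]: "pl a b c d \<circ> pl a' b' c' d' =
   pl (pl a b c d a') (pl a b c d b') (pl a b c d c') (pl a b c d d')"
proof (rule ext)
  fix x :: nat
  show "(pl a b c d \<circ> pl a' b' c' d') x = pl (pl a b c d a') (pl a b c d b') (pl a b c d c') (pl a b c d d') x"
    unfolding comp_def
    by (cases "x = 1"; cases "x = 2"; cases "x = 3"; cases "x = 4") (simp_all only: pl_def if_True if_False, simp_all)
qed

lemma pl_eq [simp]: "pl a b c d = pl a' b' c' d' \<longleftrightarrow> a = a' \<and> b = b' \<and> c = c' \<and> d = d'"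
proof
  assume h: "pl a b c d = pl a' b' c' d'"
  have "pl a b c d 1 = pl a' b' c' d' 1" "pl a b c d 2 = pl a' b' c' d' 2"
    "pl a b c d 3 = pl a' b' c' d' 3" "pl a b c d 4 = pl a' b' c' d' 4" by (simp_all only: h)
  then show "a = a' \<and> b = b' \<and> c = c' \<and> d = d'" by simp
qed simp

lemma id_pl: "id = pl 1 2 3 4" by (auto simp: pl_def fun_eq_iff)

lemma tr_pl: "transpose (1::nat) 2 = pl 2 1 3 4" "transpose (3::nat) 4 = pl 1 2 4 3"
   "transpose (1::nat) 4 = pl 4 2 3 1" "transpose (2::nat) 3 = pl 1 3 2 4"
  by (auto simp: pl_def fun_eq_iff transpose_def)

abbreviation "A4 \<equiv> alt_group 4"

lemma two_tr_in: 
  assumes "a \<in> {1..4}" "b \<in> {1..4}" "c \<in> {1..4}" "d \<in> {1..4}" "a \<noteq> b" "c \<noteq> d"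
  shows "transpose a b \<circ> transpose c d \<in> carrier A4"
  unfolding alt_group_carrier
  using assms by (simp add: permutes_compose permutes_swap_id evenperm_comp permutation_swap_id evenperm_swap)

lemma A_in: "pl 2 1 4 3 \<in> carrier A4"
  using two_tr_in[of 1 2 3 4] unfolding tr_pl by simp
lemma B_in: "pl 4 3 2 1 \<in> carrier A4"
  using two_tr_in[of 1 4 2 3] unfolding tr_pl by simp
lemma C_in: "pl 2 3 1 4 \<in> carrier A4"
  using two_tr_in[of 1 2 2 3] unfolding tr_pl by simp

lemma grA4: "group A4" by (rule alt_group_is_group)

lemma A4_nf_mult: "\<forall>x\<in>Ifull. \<forall>y\<in>Ifull. nf A4 (pl 2 1 4 3) (pl 4 3 2 1) (pl 2 3 1 4) (mfull x y) =
   nf A4 (pl 2 1 4 3) (pl 4 3 2 1) (pl 2 3 1 4) x \<otimes>\<^bsub>A4\<^esub> nf A4 (pl 2 1 4 3) (pl 4 3 2 1) (pl 2 3 1 4) y"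
  by (rule group.nf_mult[OF grA4 A_in B_in C_in]) (simp_all add: alt_group_mult alt_group_one id_pl)

lemma nfA4_img: "nf A4 (pl 2 1 4 3) (pl 4 3 2 1) (pl 2 3 1 4) ` Ifull =
  {pl 1 2 3 4, pl 2 3 1 4, pl 3 1 2 4, pl 4 3 2 1, pl 3 2 4 1, pl 2 4 3 1, pl 2 1 4 3, pl 1 4 2 3,
   pl 4 2 1 3, pl 3 4 1 2, pl 4 1 3 2, pl 1 3 4 2}"
  unfolding Ifull_def
  by (simp add: nf_def pow_num alt_group_mult alt_group_one id_pl)

lemma nfA4_inj: "inj_on (nf A4 (pl 2 1 4 3) (pl 4 3 2 1) (pl 2 3 1 4)) Ifull"
proof -
  have "card (nf A4 (pl 2 1 4 3) (pl 4 3 2 1) (pl 2 3 1 4) ` Ifull) = card Ifull"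
    unfolding nfA4_img by (simp add: Ifull_def)
  moreover have "finite Ifull" by (simp add: Ifull_def)
  ultimately show ?thesis by (rule eq_card_imp_inj_on[rotated])
qed

lemma card_A4: "card (carrier A4) = 12"
  using alt_group_card_carrier[of 4] by (simp add: fact_numeral)

lemma carrier_A4: "carrier A4 =
  {pl 1 2 3 4, pl 2 3 1 4, pl 3 1 2 4, pl 4 3 2 1, pl 3 2 4 1, pl 2 4 3 1, pl 2 1 4 3, pl 1 4 2 3,
   pl 4 2 1 3, pl 3 4 1 2, pl 4 1 3 2, pl 1 3 4 2}" (is "_ = ?E")
proof -
  have sub: "?E \<subseteq> carrier A4"
    unfolding nfA4_img[symmetric] 
  proof
    fix x assume "x \<in> nf A4 (pl 2 1 4 3) (pl 4 3 2 1) (pl 2 3 1 4) ` Ifull"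
    then obtain i j k where "x = nf A4 (pl 2 1 4 3) (pl 4 3 2 1) (pl 2 3 1 4) (i,j,k)" by auto
    then show "x \<in> carrier A4" using A_in B_in C_in
      by (simp add: nf_def group.is_monoid[OF grA4] monoid.nat_pow_closed monoid.m_closed)
  qed
  have "card ?E = 12" by (simp)
  moreover have fin: "finite (carrier A4)" using card_A4 card.infinite by force
  ultimately show ?thesis using card_subset_eq[OF fin sub] card_A4 by simp
qed

lemma did1_card:
  assumes fin: "finite (carrier G)" and c: "card (carrier G) \<le> 12"
  shows "did1 G"
  unfolding did1_def
proof (intro allI impI)
  fix x :: "nat \<Rightarrow> 'a" assume xs: "\<forall>i\<le>12. x i \<in> carrier G"
  show "\<exists>i j. i < j \<and> j \<le> 12 \<and> x i = x j"
  proof (rule ccontr)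
    assume n: "\<not> ?thesis"
    have "inj_on x {..12}"
    proof (rule inj_onI)
      fix i j assume "i \<in> {..(12::nat)}" "j \<in> {..(12::nat)}" "x i = x j"
      then show "i = j" using n by (metis atMost_iff linorder_neq_iff)
    qed
    then have "card (x ` {..12}) = 13" by (simp add: card_image)
    moreover have "x ` {..12} \<subseteq> carrier G" using xs by auto
    ultimately have "13 \<le> card (carrier G)" using fin by (metis card_mono)
    then show False using c by simp
  qed
qed

lemma did1_A4: "did1 A4"
  by (rule did1_card) (use card_A4 card.infinite in force)+

lemma did2_A4: "did2 A4"
  unfolding did2_def carrier_A4 ball_simps
  by (simp add: pow_num alt_group_mult alt_group_one id_pl)

lemma did3_A4: "did3 A4"
  unfolding did3_def carrier_A4 ball_simps
  by (simp add: pow_num alt_group_mult alt_group_one id_pl)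

lemma did5_A4: "did5 A4"
  unfolding did5_def carrier_A4 ball_simps
  by (simp add: pow_num alt_group_mult alt_group_one id_pl)

lemma cube_A4: "\<forall>x\<in>carrier A4. x [^]\<^bsub>A4\<^esub> (3::nat) \<in> {pl 1 2 3 4, pl 2 1 4 3, pl 4 3 2 1, pl 3 4 1 2}"
  unfolding carrier_A4 ball_simps
  by (simp add: pow_num alt_group_mult alt_group_one id_pl)

lemma V_dep: "\<forall>y1\<in>{pl 1 2 3 4, pl 2 1 4 3, pl 4 3 2 1, pl 3 4 1 2}.
   \<forall>y2\<in>{pl 1 2 3 4, pl 2 1 4 3, pl 4 3 2 1, pl 3 4 1 2}.
   \<forall>y3\<in>{pl 1 2 3 4, pl 2 1 4 3, pl 4 3 2 1, pl 3 4 1 2}.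
   \<exists>k1\<in>{0::nat,1}. \<exists>k2\<in>{0::nat,1}. \<exists>k3\<in>{0::nat,1}. (k1,k2,k3) \<noteq> (0,0,0) \<and>
    (if k1=0 then id else y1) \<circ> (if k2=0 then id else y2) \<circ> (if k3=0 then id else y3) = id"
  unfolding ball_simps by (simp add: id_pl)

lemma pow3k: "k \<in> {0::nat,1} \<Longrightarrow> x [^]\<^bsub>A4\<^esub> (3 * k) = (if k = 0 then id else x [^]\<^bsub>A4\<^esub> (3::nat))"
  by (auto simp: alt_group_one)

lemma did4_A4: "did4 A4"
  unfolding did4_def
proof (intro ballI)
  fix x1 x2 x3 assume x: "x1 \<in> carrier A4" "x2 \<in> carrier A4" "x3 \<in> carrier A4"
  obtain k1 k2 k3 where k: "k1 \<in> {0::nat,1}" "k2 \<in> {0::nat,1}" "k3 \<in> {0::nat,1}" "(k1,k2,k3) \<noteq> (0,0,0)"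
    "(if k1=0 then id else x1 [^]\<^bsub>A4\<^esub> (3::nat)) \<circ> (if k2=0 then id else x2 [^]\<^bsub>A4\<^esub> (3::nat))
      \<circ> (if k3=0 then id else x3 [^]\<^bsub>A4\<^esub> (3::nat)) = id"
    using V_dep cube_A4 x by (metis (no_types, lifting))
  show "\<exists>k1\<in>{0::nat,1}. \<exists>k2\<in>{0::nat,1}. \<exists>k3\<in>{0::nat,1}. (k1, k2, k3) \<noteq> (0, 0, 0) \<and>
        x1 [^]\<^bsub>A4\<^esub> (3 * k1) \<otimes>\<^bsub>A4\<^esub> x2 [^]\<^bsub>A4\<^esub> (3 * k2) \<otimes>\<^bsub>A4\<^esub> x3 [^]\<^bsub>A4\<^esub> (3 * k3)
          = \<one>\<^bsub>A4\<^esub>"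
    using k by (intro bexI[of _ k1] bexI[of _ k2] bexI[of _ k3]) (simp_all only: pow3k alt_group_mult alt_group_one, simp)
qed

lemma A4_satisfies: "satisfies_A4_basis A4"
  unfolding satisfies_A4_basis_def using did1_A4 did2_A4 did3_A4 did4_A4 did5_A4 by blast

definition IV :: "(nat\<times>nat\<times>nat) set" where "IV = {(0,0,0),(0,1,0),(1,0,0),(1,1,0)}"

lemma IV_sub: "IV \<subseteq> Ifull" by (auto simp: IV_def Ifull_def)

lemma (in group) nf_mult_V:
  assumes ab: "a \<in> carrier G" "b \<in> carrier G" "c \<in> carrier G"
    and r1: "a \<otimes> a = \<one>" and r2: "b \<otimes> b = \<one>" and r3: "b \<otimes> a = a \<otimes> b"
  shows "\<forall>x\<in>IV. \<forall>y\<in>IV. nf G a b c (mfull x y) = nf G a b c x \<otimes> nf G a b c y"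
proof -
  have s1: "a \<otimes> (a \<otimes> z) = z" if "z \<in> carrier G" for z using r1 that ab by (simp flip: m_assoc)
  have s2: "b \<otimes> (b \<otimes> z) = z" if "z \<in> carrier G" for z using r2 that ab by (simp flip: m_assoc)
  have s3: "b \<otimes> (a \<otimes> z) = a \<otimes> (b \<otimes> z)" if "z \<in> carrier G" for z using r3 that ab by (simp flip: m_assoc)
  note rules = r1 r2 r3 s1 s2 s3
  show ?thesis
    unfolding IV_def ball_simps
    apply (simp add: nf_def mfull_def rot_def)
    apply (simp add: m_assoc ab rules)
    done
qed

lemma mfull_closed: "\<forall>x\<in>Ifull. \<forall>y\<in>Ifull. mfull x y \<in> Ifull"
  unfolding Ifull_def ball_simps by (simp add: mfull_def rot_def)

lemma mV_closed: "\<forall>x\<in>IV. \<forall>y\<in>IV. mfull x y \<in> IV"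
  unfolding IV_def ball_simps by (simp add: mfull_def rot_def)

lemma nfA4_IV: "nf A4 (pl 2 1 4 3) (pl 4 3 2 1) (pl 2 3 1 4) ` IV = {pl 1 2 3 4, pl 2 1 4 3, pl 4 3 2 1, pl 3 4 1 2}"
  unfolding IV_def
  by (simp add: nf_def pow_num alt_group_mult alt_group_one id_pl insert_commute)

lemma V_subgroup: "subgroup {pl 1 2 3 4, pl 2 1 4 3, pl 4 3 2 1, pl 3 4 1 2} A4"
proof (rule group.subgroupI[OF grA4])
  show "{pl 1 2 3 4, pl 2 1 4 3, pl 4 3 2 1, pl 3 4 1 2} \<subseteq> carrier A4"
    unfolding carrier_A4 by auto
  show "{pl 1 2 3 4, pl 2 1 4 3, pl 4 3 2 1, pl 3 4 1 2} \<noteq> {}" by simp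
next
  fix x assume x: "x \<in> {pl 1 2 3 4, pl 2 1 4 3, pl 4 3 2 1, pl 3 4 1 2}"
  then have xc: "x \<in> carrier A4" unfolding carrier_A4 by auto
  have "x \<otimes>\<^bsub>A4\<^esub> x = \<one>\<^bsub>A4\<^esub>" using x by (auto simp: alt_group_mult alt_group_one id_pl)
  then have "inv\<^bsub>A4\<^esub> x = x" using group.inv_equality[OF grA4] xc by blast
  then show "inv\<^bsub>A4\<^esub> x \<in> {pl 1 2 3 4, pl 2 1 4 3, pl 4 3 2 1, pl 3 4 1 2}" using x by simp
next
  fix x y assume "x \<in> {pl 1 2 3 4, pl 2 1 4 3, pl 4 3 2 1, pl 3 4 1 2}" "y \<in> {pl 1 2 3 4, pl 2 1 4 3, pl 4 3 2 1, pl 3 4 1 2}"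
  then show "x \<otimes>\<^bsub>A4\<^esub> y \<in> {pl 1 2 3 4, pl 2 1 4 3, pl 4 3 2 1, pl 3 4 1 2}"
    by (auto simp: alt_group_mult)
qed

lemma section_full:
  fixes G :: "('a,'b) monoid_scheme"
  assumes grG: "group G" and ab: "a \<in> carrier G" "b \<in> carrier G" "c \<in> carrier G"
    and r1: "a \<otimes>\<^bsub>G\<^esub> a = \<one>\<^bsub>G\<^esub>" and r2: "b \<otimes>\<^bsub>G\<^esub> b = \<one>\<^bsub>G\<^esub>" and r3: "b \<otimes>\<^bsub>G\<^esub> a = a \<otimes>\<^bsub>G\<^esub> b"
    and r4: "c \<otimes>\<^bsub>G\<^esub> (c \<otimes>\<^bsub>G\<^esub> c) = \<one>\<^bsub>G\<^esub>" and r5: "c \<otimes>\<^bsub>G\<^esub> a = b \<otimes>\<^bsub>G\<^esub> c"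
    and r6: "c \<otimes>\<^bsub>G\<^esub> b = a \<otimes>\<^bsub>G\<^esub> (b \<otimes>\<^bsub>G\<^esub> c)"
    and im: "nf G a b c ` Ifull = carrier G"
  shows "iso_to_section_of G A4"
proof (rule transport_section[OF grG grA4 group.subgroup_self[OF grA4], where I=Ifull and m=mfull
   and fA="nf A4 (pl 2 1 4 3) (pl 4 3 2 1) (pl 2 3 1 4)" and fG="nf G a b c"])
  show "\<And>x y. x \<in> Ifull \<Longrightarrow> y \<in> Ifull \<Longrightarrow> mfull x y \<in> Ifull" using mfull_closed by blast
  show "inj_on (nf A4 (pl 2 1 4 3) (pl 4 3 2 1) (pl 2 3 1 4)) Ifull" by (rule nfA4_inj)
  show "nf A4 (pl 2 1 4 3) (pl 4 3 2 1) (pl 2 3 1 4) ` Ifull = carrier A4" using nfA4_img carrier_A4 by simp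
  show "\<And>x y. x \<in> Ifull \<Longrightarrow> y \<in> Ifull \<Longrightarrow> nf A4 (pl 2 1 4 3) (pl 4 3 2 1) (pl 2 3 1 4) (mfull x y) =
      nf A4 (pl 2 1 4 3) (pl 4 3 2 1) (pl 2 3 1 4) x \<otimes>\<^bsub>A4\<^esub> nf A4 (pl 2 1 4 3) (pl 4 3 2 1) (pl 2 3 1 4) y"
    using A4_nf_mult by blast
  show "\<And>x y. x \<in> Ifull \<Longrightarrow> y \<in> Ifull \<Longrightarrow> nf G a b c (mfull x y) = nf G a b c x \<otimes>\<^bsub>G\<^esub> nf G a b c y"
    using group.nf_mult[OF grG ab r1 r2 r3 r4 r5 r6] by blast
  show "nf G a b c ` Ifull = carrier G" by (rule im)
qed

lemma section_V:
  fixes G :: "('a,'b) monoid_scheme"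
  assumes grG: "group G" and ab: "a \<in> carrier G" "b \<in> carrier G"
    and r1: "a \<otimes>\<^bsub>G\<^esub> a = \<one>\<^bsub>G\<^esub>" and r2: "b \<otimes>\<^bsub>G\<^esub> b = \<one>\<^bsub>G\<^esub>" and r3: "b \<otimes>\<^bsub>G\<^esub> a = a \<otimes>\<^bsub>G\<^esub> b"
    and im: "nf G a b \<one>\<^bsub>G\<^esub> ` IV = carrier G"
  shows "iso_to_section_of G A4"
proof (rule transport_section[OF grG grA4 V_subgroup, where I=IV and m=mfull
   and fA="nf A4 (pl 2 1 4 3) (pl 4 3 2 1) (pl 2 3 1 4)" and fG="nf G a b \<one>\<^bsub>G\<^esub>"])
  show "\<And>x y. x \<in> IV \<Longrightarrow> y \<in> IV \<Longrightarrow> mfull x y \<in> IV" using mV_closed by blast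
  show "inj_on (nf A4 (pl 2 1 4 3) (pl 4 3 2 1) (pl 2 3 1 4)) IV" using nfA4_inj IV_sub inj_on_subset by blast
  show "nf A4 (pl 2 1 4 3) (pl 4 3 2 1) (pl 2 3 1 4) ` IV = {pl 1 2 3 4, pl 2 1 4 3, pl 4 3 2 1, pl 3 4 1 2}" by (rule nfA4_IV)
  show "\<And>x y. x \<in> IV \<Longrightarrow> y \<in> IV \<Longrightarrow> nf A4 (pl 2 1 4 3) (pl 4 3 2 1) (pl 2 3 1 4) (mfull x y) =
      nf A4 (pl 2 1 4 3) (pl 4 3 2 1) (pl 2 3 1 4) x \<otimes>\<^bsub>A4\<^esub> nf A4 (pl 2 1 4 3) (pl 4 3 2 1) (pl 2 3 1 4) y"
    using A4_nf_mult IV_sub by blast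
  show "\<And>x y. x \<in> IV \<Longrightarrow> y \<in> IV \<Longrightarrow> nf G a b \<one>\<^bsub>G\<^esub> (mfull x y) = nf G a b \<one>\<^bsub>G\<^esub> x \<otimes>\<^bsub>G\<^esub> nf G a b \<one>\<^bsub>G\<^esub> y"
    using group.nf_mult_V[OF grG ab monoid.one_closed[OF group.is_monoid[OF grG]] r1 r2 r3] by blast
  show "nf G a b \<one>\<^bsub>G\<^esub> ` IV = carrier G" by (rule im)
qed

locale dgrp = group G for G (structure) +
  assumes d2: "did2 G" and d3: "did3 G" and d4: "did4 G" and d5: "did5 G"

context group begin

lemma eq1: "x \<in> carrier G \<Longrightarrow> y \<in> carrier G \<Longrightarrow> x \<otimes> x = \<one> \<Longrightarrow> x \<otimes> y = \<one> \<Longrightarrow> y = x"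
  by (metis l_cancel)

lemma I3: "x \<in> carrier G \<Longrightarrow> x \<otimes> x = \<one> \<Longrightarrow> x \<otimes> x \<otimes> x = x" by simp

lemma Icomm: assumes "x \<in> carrier G" "y \<in> carrier G" "x \<otimes> x = \<one>" "y \<otimes> y = \<one>" "x \<otimes> y \<otimes> (x \<otimes> y) = \<one>"
  shows "y \<otimes> x = x \<otimes> y"
proof -
  have "x \<otimes> (y \<otimes> (x \<otimes> y)) = \<one>" using assms by (simp add: m_assoc)
  then have h: "y \<otimes> (x \<otimes> y) = x" using assms eq1 by simp
  have "y \<otimes> (y \<otimes> (x \<otimes> y)) = y \<otimes> x" using h by simp
  also have "y \<otimes> (y \<otimes> (x \<otimes> y)) = x \<otimes> y" using assms by (simp flip: m_assoc)
  finally show ?thesis by simp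
qed

end

context dgrp begin

lemma D2: "x \<in> carrier G \<Longrightarrow> x \<otimes> x = \<one> \<or> x \<otimes> x \<otimes> x = \<one>"
  using d2 unfolding did2_def by (simp add: pow_num)

lemma D3: "x \<in> carrier G \<Longrightarrow> y \<in> carrier G \<Longrightarrow> x \<otimes> x \<otimes> x = \<one> \<or> y \<otimes> y \<otimes> y = \<one> \<or> x \<otimes> y \<otimes> (x \<otimes> y) = \<one>"
  using d3 unfolding did3_def by (simp add: pow_num, blast)

lemma D5: "x \<in> carrier G \<Longrightarrow> y \<in> carrier G \<Longrightarrow> x [^] (4::nat) = \<one> \<or> y [^] (4::nat) = \<one> \<or>
   (x \<otimes> y) [^] (4::nat) = \<one> \<or> (x \<otimes> (y \<otimes> y)) [^] (4::nat) = \<one>"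
  using d5 unfolding did5_def by blast

lemma P4: assumes "x \<in> carrier G" "x [^] (4::nat) = \<one>" shows "x \<otimes> x = \<one>"
proof -
  have e: "x \<otimes> x \<otimes> x \<otimes> x = \<one>" using assms by (simp add: pow_num)
  show ?thesis
  proof (cases "x \<otimes> x \<otimes> x = \<one>")
    case True
    then have "x = \<one>" using e assms by simp
    then show ?thesis by simp
  next
    case False then show ?thesis using D2 assms by blast
  qed
qed

lemma Icl: assumes "x \<in> carrier G" "y \<in> carrier G" "x \<otimes> x = \<one>" "y \<otimes> y = \<one>"
  shows "x \<otimes> y \<otimes> (x \<otimes> y) = \<one>"
proof -
  consider "x \<otimes> x \<otimes> x = \<one>" | "y \<otimes> y \<otimes> y = \<one>" | "x \<otimes> y \<otimes> (x \<otimes> y) = \<one>" using D3 assms by blast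
  then show ?thesis
  proof cases
    case 1 then have "x = \<one>" using assms by simp
    then show ?thesis using assms by simp
  next
    case 2 then have "y = \<one>" using assms by simp
    then show ?thesis using assms by simp
  qed
qed

lemma Icomm': assumes "x \<in> carrier G" "y \<in> carrier G" "x \<otimes> x = \<one>" "y \<otimes> y = \<one>"
  shows "y \<otimes> x = x \<otimes> y"
  using Icomm[OF assms Icl[OF assms]] .

lemma pow3k_inv: "x \<in> carrier G \<Longrightarrow> x \<otimes> x = \<one> \<Longrightarrow> k \<in> {0::nat,1} \<Longrightarrow> x [^] (3 * k) = (if k = 0 then \<one> else x)"
  by (auto simp: pow_num)

lemma V_closure:
  assumes c: "a \<in> carrier G" "b \<in> carrier G" "z \<in> carrier G"
    and i: "a \<otimes> a = \<one>" "b \<otimes> b = \<one>" "z \<otimes> z = \<one>" and n: "a \<noteq> \<one>" "b \<noteq> \<one>" "a \<noteq> b"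
  shows "z = \<one> \<or> z = a \<or> z = b \<or> z = a \<otimes> b"
proof -
  obtain k1 k2 k3 where k: "k1 \<in> {0::nat,1}" "k2 \<in> {0::nat,1}" "k3 \<in> {0::nat,1}" "(k1,k2,k3) \<noteq> (0,0,0)"
    "a [^] (3 * k1) \<otimes> b [^] (3 * k2) \<otimes> z [^] (3 * k3) = \<one>"
    using d4 c unfolding did4_def by meson
  then have e: "(if k1 = 0 then \<one> else a) \<otimes> (if k2 = 0 then \<one> else b) \<otimes> (if k3 = 0 then \<one> else z) = \<one>"
    using pow3k_inv[OF c(1) i(1) k(1)] pow3k_inv[OF c(2) i(2) k(2)] pow3k_inv[OF c(3) i(3) k(3)] k(5) by simp
  have ab: "a \<otimes> b \<otimes> (a \<otimes> b) = \<one>" using Icl c i by blast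
  have "(k1=0 \<and> k2=0 \<and> k3=1) \<or> (k1=0 \<and> k2=1 \<and> k3=0) \<or> (k1=0 \<and> k2=1 \<and> k3=1) \<or>
        (k1=1 \<and> k2=0 \<and> k3=0) \<or> (k1=1 \<and> k2=0 \<and> k3=1) \<or> (k1=1 \<and> k2=1 \<and> k3=0) \<or>
        (k1=1 \<and> k2=1 \<and> k3=1)" using k by auto
  then show ?thesis
  proof (elim disjE conjE)
    assume "k1=0" "k2=0" "k3=1" then have "z = \<one>" using e c by simp
    then show ?thesis by simp
  next
    assume "k1=0" "k2=1" "k3=0" then have "b = \<one>" using e c by simp
    then show ?thesis using n by simp
  next
    assume "k1=0" "k2=1" "k3=1" then have "b \<otimes> z = \<one>" using e c by simp
    then have "z = b" using eq1 c i by blast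
    then show ?thesis by simp
  next
    assume "k1=1" "k2=0" "k3=0" then have "a = \<one>" using e c by simp
    then show ?thesis using n by simp
  next
    assume "k1=1" "k2=0" "k3=1" then have "a \<otimes> z = \<one>" using e c by simp
    then have "z = a" using eq1 c i by blast
    then show ?thesis by simp
  next
    assume "k1=1" "k2=1" "k3=0" then have "a \<otimes> b = \<one>" using e c by simp
    then have "b = a" using eq1 c i by blast
    then show ?thesis using n by simp
  next
    assume "k1=1" "k2=1" "k3=1" then have "a \<otimes> b \<otimes> z = \<one>" using e c by simp
    then have "z = a \<otimes> b" using eq1[of "a \<otimes> b" z] c ab by simp
    then show ?thesis by simp
  qed
qed

lemma noncomm:
  assumes c: "a \<in> carrier G" "c \<in> carrier G" and i: "a \<otimes> a = \<one>" "a \<noteq> \<one>"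
    and cc: "c \<otimes> c \<noteq> \<one>" "c \<otimes> (c \<otimes> c) = \<one>"
  shows "c \<otimes> a \<noteq> a \<otimes> c"
proof
  assume h: "c \<otimes> a = a \<otimes> c"
  have s1: "c \<otimes> (a \<otimes> z) = a \<otimes> (c \<otimes> z)" if "z \<in> carrier G" for z using h that c by (simp flip: m_assoc)
  have s2: "a \<otimes> (a \<otimes> z) = z" if "z \<in> carrier G" for z using i that c by (simp flip: m_assoc)
  have s3: "c \<otimes> (c \<otimes> (c \<otimes> z)) = z" if "z \<in> carrier G" for z using cc that c by (simp flip: m_assoc)
  have "c \<otimes> a \<otimes> (c \<otimes> a) = \<one> \<or> c \<otimes> a \<otimes> (c \<otimes> a) \<otimes> (c \<otimes> a) = \<one>" using D2 c by simp
  then show False using c i cc by (simp add: m_assoc h s1 s2 s3)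
qed

end

context dgrp begin

lemma nf_in: "a \<in> carrier G \<Longrightarrow> b \<in> carrier G \<Longrightarrow> c \<in> carrier G \<Longrightarrow> nf G a b c x \<in> carrier G"
  by (cases x) (auto simp: nf_def)

lemma case_A4:
  assumes c: "c \<in> carrier G" and cc: "c \<otimes> c \<noteq> \<one>" and a: "a \<in> carrier G" and aa: "a \<otimes> a = \<one>" and a1: "a \<noteq> \<one>"
  shows "iso_to_section_of G A4"
proof -
  have c3: "c \<otimes> (c \<otimes> c) = \<one>" using D2[OF c] cc c by (simp add: m_assoc)
  have c1: "c \<noteq> \<one>" using cc by auto
  have sc: "c \<otimes> (c \<otimes> (c \<otimes> z)) = z" if "z \<in> carrier G" for z using c3 that c by (simp flip: m_assoc)
  have sa: "a \<otimes> (a \<otimes> z) = z" if "z \<in> carrier G" for z using aa that a by (simp flip: m_assoc)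
  define b where "b = c \<otimes> (a \<otimes> (c \<otimes> c))"
  have b: "b \<in> carrier G" unfolding b_def using a c by simp
  have r5: "c \<otimes> a = b \<otimes> c" unfolding b_def using a c c3 by (simp add: m_assoc)
  have bb: "b \<otimes> b = \<one>" unfolding b_def using a c c3 by (simp add: m_assoc sc sa)
  have sb: "b \<otimes> (b \<otimes> z) = z" if "z \<in> carrier G" for z using bb that b by (simp flip: m_assoc)
  have b1: "b \<noteq> \<one>"
  proof
    assume "b = \<one>"
    then have "c \<otimes> a = c \<otimes> \<one>" using r5 c by simp
    then show False using a1 a c by simp
  qed
  have ba: "b \<noteq> a"
  proof
    assume "b = a"
    then show False using noncomm[OF a c aa a1 cc c3] r5 by simp
  qed
  have r3: "b \<otimes> a = a \<otimes> b" using Icomm'[OF a b aa bb] .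
  have T: "z = \<one> \<or> z = a \<or> z = b \<or> z = a \<otimes> b" if "z \<in> carrier G" "z \<otimes> z = \<one>" for z
    using V_closure[OF a b that(1) aa bb that(2) a1 b1 ba[symmetric]] .
  define d where "d = c \<otimes> (b \<otimes> (c \<otimes> c))"
  have d: "d \<in> carrier G" unfolding d_def using b c by simp
  have dc: "c \<otimes> b = d \<otimes> c" unfolding d_def using b c c3 by (simp add: m_assoc)
  have dd: "d \<otimes> d = \<one>" unfolding d_def using b c c3 by (simp add: m_assoc sc sb)
  have d1: "d \<noteq> \<one>"
  proof
    assume "d = \<one>"
    then have "c \<otimes> b = c \<otimes> \<one>" using dc c by simp
    then show False using b1 b c by simp
  qed
  have db: "d \<noteq> b"
  proof
    assume "d = b"
    then show False using noncomm[OF b c bb b1 cc c3] dc by simp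
  qed
  have da: "d \<noteq> a"
  proof
    assume "d = a"
    then have E: "c \<otimes> b = a \<otimes> c" using dc by simp
    have "c \<otimes> (c \<otimes> b) \<otimes> c = c \<otimes> (a \<otimes> c) \<otimes> c" by (simp only: E)
    then have "a = b" unfolding b_def using a c c3 by (simp add: m_assoc sc)
    then show False using ba by simp
  qed
  have "d = a \<otimes> b" using T[OF d dd] d1 da db by simp
  then have r6: "c \<otimes> b = a \<otimes> (b \<otimes> c)" using dc a b c by (simp add: m_assoc)
  have s3: "b \<otimes> (a \<otimes> z) = a \<otimes> (b \<otimes> z)" if "z \<in> carrier G" for z using r3 that a b by (simp flip: m_assoc)
  have s5: "c \<otimes> (a \<otimes> z) = b \<otimes> (c \<otimes> z)" if "z \<in> carrier G" for z using r5 that a b c by (simp flip: m_assoc)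
  have s6: "c \<otimes> (b \<otimes> z) = a \<otimes> (b \<otimes> (c \<otimes> z))" if "z \<in> carrier G" for z using r6 that a b c by (simp flip: m_assoc)
  note rules = aa bb r3 c3 r5 r6 sa sb s3 sc s5 s6
  have nfI: "w \<in> nf G a b c ` Ifull" if "w \<in> {\<one>, a, b, a \<otimes> b, c \<otimes> (c \<otimes> \<one>), c \<otimes> (c \<otimes> a), c \<otimes> (c \<otimes> b), c \<otimes> (c \<otimes> (a \<otimes> b)),
     (c \<otimes> (c \<otimes> \<one>)) \<otimes> (c \<otimes> (c \<otimes> \<one>)), (c \<otimes> (c \<otimes> a)) \<otimes> (c \<otimes> (c \<otimes> a)),
     (c \<otimes> (c \<otimes> b)) \<otimes> (c \<otimes> (c \<otimes> b)), (c \<otimes> (c \<otimes> (a \<otimes> b))) \<otimes> (c \<otimes> (c \<otimes> (a \<otimes> b)))}" for w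
    using that unfolding Ifull_def
    apply (simp only: image_insert image_empty insert_iff empty_iff)
    apply (elim disjE; simp add: nf_def pow_num a b c m_assoc rules)
    done
  have im: "nf G a b c ` Ifull = carrier G"
  proof
    show "nf G a b c ` Ifull \<subseteq> carrier G" using nf_in a b c by blast
  next
    show "carrier G \<subseteq> nf G a b c ` Ifull"
    proof
      fix g assume g: "g \<in> carrier G"
      show "g \<in> nf G a b c ` Ifull"
      proof (cases "g \<otimes> g = \<one>")
        case True
        then show ?thesis using T[OF g] nfI by blast
      next
        case False
        then have g3: "g \<otimes> (g \<otimes> g) = \<one>" using D2[OF g] g by (simp add: m_assoc)
        have g1: "g \<noteq> \<one>" using False by auto
        have "c [^] (4::nat) = c" using c c3 by (simp add: pow_num m_assoc)
        moreover have "g [^] (4::nat) = g" using g g3 by (simp add: pow_num m_assoc)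
        ultimately have "(c \<otimes> g) [^] (4::nat) = \<one> \<or> (c \<otimes> (g \<otimes> g)) [^] (4::nat) = \<one>"
          using D5[OF c g] c1 g1 by auto
        then show ?thesis
        proof
          assume "(c \<otimes> g) [^] (4::nat) = \<one>"
          then have "c \<otimes> g \<otimes> (c \<otimes> g) = \<one>" using P4 c g by simp
          then obtain t where t: "t \<in> {\<one>, a, b, a \<otimes> b}" "c \<otimes> g = t" using T[of "c \<otimes> g"] c g by blast
          have "g = c \<otimes> (c \<otimes> (c \<otimes> g))" using sc g by simp
          then have "g = c \<otimes> (c \<otimes> t)" using t by simp
          then show ?thesis using t nfI by auto
        next
          assume "(c \<otimes> (g \<otimes> g)) [^] (4::nat) = \<one>"
          then have "c \<otimes> (g \<otimes> g) \<otimes> (c \<otimes> (g \<otimes> g)) = \<one>" using P4 c g by simp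
          then obtain t where t: "t \<in> {\<one>, a, b, a \<otimes> b}" "c \<otimes> (g \<otimes> g) = t" using T[of "c \<otimes> (g \<otimes> g)"] c g by blast
          have "g \<otimes> g = c \<otimes> (c \<otimes> (c \<otimes> (g \<otimes> g)))" using sc g by simp
          then have gg: "g \<otimes> g = c \<otimes> (c \<otimes> t)" using t by simp
          have "g = (g \<otimes> g) \<otimes> (g \<otimes> g)"
          proof -
            have "(g \<otimes> g) \<otimes> (g \<otimes> g) = (g \<otimes> (g \<otimes> g)) \<otimes> g" using g by (simp add: m_assoc)
            also have "\<dots> = g" using g3 g by simp
            finally show ?thesis by simp
          qed
          then have "g = (c \<otimes> (c \<otimes> t)) \<otimes> (c \<otimes> (c \<otimes> t))" using gg by simp
          then show ?thesis using t nfI by auto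
        qed
      qed
    qed
  qed
  show ?thesis
    by (rule section_full[OF is_group a b c aa bb r3 c3 r5 r6 im])
qed

lemma converse: "iso_to_section_of G A4"
proof (cases "\<forall>x\<in>carrier G. x \<otimes> x = \<one>")
  case allT: True
  show ?thesis
  proof (cases "\<forall>x\<in>carrier G. x = \<one>")
    case True
    have "carrier G = {\<one>}" using True by auto
    moreover have "nf G \<one> \<one> \<one> ` IV = {\<one>}" by (simp add: IV_def nf_def pow_num)
    ultimately show ?thesis using section_V[OF is_group one_closed one_closed] by simp
  next
    case False
    then obtain a where a: "a \<in> carrier G" "a \<noteq> \<one>" by blast
    have aa: "a \<otimes> a = \<one>" using allT a by blast
    show ?thesis
    proof (cases "\<forall>x\<in>carrier G. x = \<one> \<or> x = a")
      case True
      have "carrier G = {\<one>, a}" using True a by auto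
      moreover have "nf G a \<one> \<one> ` IV = {\<one>, a}" using a by (auto simp: IV_def nf_def pow_num)
      ultimately show ?thesis using section_V[OF is_group a(1) one_closed aa] by simp
    next
      case False
      then obtain b where b: "b \<in> carrier G" "b \<noteq> \<one>" "b \<noteq> a" by blast
      have bb: "b \<otimes> b = \<one>" using allT b by blast
      have r3: "b \<otimes> a = a \<otimes> b" using Icomm'[OF a(1) b(1) aa bb] .
      have "carrier G \<subseteq> {\<one>, a, b, a \<otimes> b}"
        using V_closure[OF a(1) b(1) _ aa bb _ a(2) b(2) b(3)[symmetric]] allT by blast
      then have "carrier G = {\<one>, a, b, a \<otimes> b}" using a b by auto
      moreover have "nf G a b \<one> ` IV = {\<one>, a, b, a \<otimes> b}" using a b by (auto simp: IV_def nf_def pow_num)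
      ultimately show ?thesis using section_V[OF is_group a(1) b(1) aa bb r3] by simp
    qed
  qed
next
  case False
  then obtain c where c: "c \<in> carrier G" and cc: "c \<otimes> c \<noteq> \<one>" by blast
  show ?thesis
  proof (cases "\<exists>a\<in>carrier G. a \<otimes> a = \<one> \<and> a \<noteq> \<one>")
    case True
    then show ?thesis using case_A4[OF c cc] by blast
  next
    case noT: False
    have c3: "c \<otimes> (c \<otimes> c) = \<one>" using D2[OF c] cc c by (simp add: m_assoc)
    have c1: "c \<noteq> \<one>" using cc by auto
    have sc: "c \<otimes> (c \<otimes> (c \<otimes> z)) = z" if "z \<in> carrier G" for z using c3 that c by (simp flip: m_assoc)
    have "carrier G \<subseteq> {\<one>, c, c \<otimes> c}"
    proof
      fix g assume g: "g \<in> carrier G"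
      show "g \<in> {\<one>, c, c \<otimes> c}"
      proof (cases "g = \<one>")
        case False
        then have "g \<otimes> g \<noteq> \<one>" using noT g by blast
        then have g3: "g \<otimes> (g \<otimes> g) = \<one>" using D2[OF g] g by (simp add: m_assoc)
        have "c [^] (4::nat) = c" using c c3 by (simp add: pow_num m_assoc)
        moreover have "g [^] (4::nat) = g" using g g3 by (simp add: pow_num m_assoc)
        ultimately have "(c \<otimes> g) [^] (4::nat) = \<one> \<or> (c \<otimes> (g \<otimes> g)) [^] (4::nat) = \<one>"
          using D5[OF c g] c1 False by auto
        then show ?thesis
        proof
          assume "(c \<otimes> g) [^] (4::nat) = \<one>"
          then have "c \<otimes> g \<otimes> (c \<otimes> g) = \<one>" using P4 c g by simp
          then have "c \<otimes> g = \<one>" using noT c g by blast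
          moreover have "g = c \<otimes> (c \<otimes> (c \<otimes> g))" using sc g by simp
          ultimately have "g = c \<otimes> c" using c by simp
          then show ?thesis by simp
        next
          assume "(c \<otimes> (g \<otimes> g)) [^] (4::nat) = \<one>"
          then have "c \<otimes> (g \<otimes> g) \<otimes> (c \<otimes> (g \<otimes> g)) = \<one>" using P4 c g by simp
          then have t: "c \<otimes> (g \<otimes> g) = \<one>" using noT c g by blast
          have "g \<otimes> g = c \<otimes> (c \<otimes> (c \<otimes> (g \<otimes> g)))" using sc g by simp
          then have gg: "g \<otimes> g = c \<otimes> c" using t c by simp
          have "g = (g \<otimes> g) \<otimes> (g \<otimes> g)"
          proof -
            have "(g \<otimes> g) \<otimes> (g \<otimes> g) = (g \<otimes> (g \<otimes> g)) \<otimes> g" using g by (simp add: m_assoc)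
            also have "\<dots> = g" using g3 g by simp
            finally show ?thesis by simp
          qed
          also have "\<dots> = c \<otimes> (c \<otimes> (c \<otimes> c))" using gg c by (simp add: m_assoc)
          also have "\<dots> = c" using sc c by simp
          finally show ?thesis by simp
        qed
      qed simp
    qed
    then have "carrier G = {\<one>, c, c \<otimes> c}" using c by auto
    moreover have "nf G \<one> \<one> c ` Ifull = {\<one>, c, c \<otimes> c}" 
      unfolding Ifull_def using c by (simp add: nf_def pow_num insert_commute)
    ultimately have im: "nf G \<one> \<one> c ` Ifull = carrier G" by simp
    show ?thesis
      by (rule section_full[OF is_group one_closed one_closed c _ _ _ c3 _ _ im]) (use c in simp_all)
  qed
qed

end

theorem proposition3:
  fixes G :: "('a, 'b) monoid_scheme"
  shows "satisfies_A4_basis (alt_group 4)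
    \<and> (group G \<and> satisfies_A4_basis G \<longrightarrow> iso_to_section_of G (alt_group 4))"
proof (intro conjI impI)
  show "satisfies_A4_basis (alt_group 4)" by (rule A4_satisfies)
next
  assume "group G \<and> satisfies_A4_basis G"
  then have "dgrp G" unfolding dgrp_def dgrp_axioms_def satisfies_A4_basis_def by blast
  then show "iso_to_section_of G (alt_group 4)" by (rule dgrp.converse)
qed


end
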